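(* Let $q\neq-1$ be real and $n\ge0$. Then $$T_n(x,s,q)=\sum_{k=0}^{\lfloor n/2\rfloor}q^{k^2}\frac{(1+q)\cdots(1+q^{n-1})}{(1+q)\cdots(1+q^{k})\cdot(1+q^{n-k})\cdots(1+q^{n-1})}\,\frac{[n]}{[n-k]}\begin{bmatrix} n-k\\ k\end{bmatrix}s^kx^{n-2k}$$ $$=\sum_{k=0}^{\lfloor (n-1)/2\rfloor}q^{k^2}(1+q^{k+1})\cdots(1+q^{n-k-1})\frac{[n]}{[n-k]}\begin{bmatrix} n-k\\ k\end{bmatrix}s^kx^{n-2k}+[n\equiv 0 \pmod 2]\,q^{(n/2)^2}s^{n/2}.$$
   Context: $T_0=1$, $T_1=x$, $T_n(x,s,q)=(1+q^{n-1})x\,T_{n-1}(x,s,q)+q^{n-1}s\,T_{n-2}(x,s,q)$ for $n\ge2$. Notation: $[m]=1+q+\cdots+q^{m-1}$, $[m]!=[1]\cdots[m]$, $\begin{bmatrix} m\\ j\end{bmatrix}=\frac{[m]!}{[j]![m-j]!}$; empty products equal $1$; $[P]$ is the Iverson bracket ($1$ if $P$ holds, $0$ otherwise). For $n=0$ the term $\frac{[n]}{[n-k]}$ with $k=0$ is read as $1$. *)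

theory Defs
  imports Complex_Main
begin

fun T :: "real \<Rightarrow> real \<Rightarrow> real \<Rightarrow> nat \<Rightarrow> real" where
  "T x s q 0 = 1"
| "T x s q (Suc 0) = x"
| "T x s q (Suc (Suc n)) =
     (1 + q ^ (Suc n)) * x * T x s q (Suc n) + q ^ (Suc n) * s * T x s q n"

definition qint :: "real \<Rightarrow> nat \<Rightarrow> real" where
  "qint q m = (\<Sum>i<m. q ^ i)"

definition qfact :: "real \<Rightarrow> nat \<Rightarrow> real" where
  "qfact q m = (\<Prod>i=1..m. qint q i)"

definition qbinom :: "real \<Rightarrow> nat \<Rightarrow> nat \<Rightarrow> real" where
  "qbinom q m j = qfact q m / (qfact q j * qfact q (m - j))"

end

theory Submission
  imports Defs
begin

lemma qint_Suc: "qint q (Suc m) = qint q m + q^m" by (simp add: qint_def)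
lemma qint_0[simp]: "qint q 0 = 0" by (simp add: qint_def)

lemma qint_closed: "(1 - q) * qint q m = 1 - q^m"
proof (induction m)
  case (Suc m)
  have "(1-q)*qint q (Suc m) = (1-q)*qint q m + (1-q)*q^m" by (simp add: qint_Suc algebra_simps)
  also have "\<dots> = 1 - q^Suc m" unfolding Suc.IH by (simp add: algebra_simps)
  finally show ?case .
qed simp

lemma qint_1: "qint 1 m = real m" by (simp add: qint_def)

lemma abs1: fixes q :: real assumes "q^m = 1 \<or> q^m = -1" "m > 0" shows "\<bar>q\<bar> = 1"
proof -
  have "\<bar>q^m\<bar> = 1" using assms(1) by auto
  hence "\<bar>q\<bar>^m = 1^m" by (simp add: power_abs)
  thus ?thesis using assms(2) power_eq_imp_eq_base[of "\<bar>q\<bar>" m 1] by simp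
qed

lemma qint_nz: assumes "q \<noteq> -1" "m \<ge> 1" shows "qint q m \<noteq> 0"
proof
  assume h: "qint q m = 0"
  show False
  proof (cases "q = 1")
    case True thus False using h assms by (simp add: qint_1)
  next
    case False
    have "q^m = 1" using qint_closed[of q m] h by simp
    hence "\<bar>q\<bar> = 1" using abs1 assms by auto
    thus False using False assms by (auto simp: abs_if split: if_splits)
  qed
qed

lemma onep_nz: assumes "q \<noteq> -1" shows "1 + q^i \<noteq> (0::real)"
proof
  assume h: "1 + q^i = 0"
  hence qi: "q^i = -1" by simp
  hence "i > 0" by (cases i) auto
  hence "\<bar>q\<bar> = 1" using abs1 qi by auto
  thus False using assms qi by (auto simp: abs_if split: if_splits)
qed

lemma qint_double: "qint q (2*m) = (1 + q^m) * qint q m"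
proof (cases "q = 1")
  case True thus ?thesis by (simp add: qint_1)
next
  case False
  have "(1-q) * qint q (2*m) = 1 - q^m * q^m"
    by (simp add: qint_closed flip: power_add mult_2)
  also have "\<dots> = (1 + q^m) * ((1-q) * qint q m)" by (subst qint_closed) (simp add: algebra_simps)
  finally have "(1-q) * qint q (2*m) = (1-q) * ((1 + q^m) * qint q m)" by simp
  thus ?thesis using False by simp
qed

definition P :: "real \<Rightarrow> nat \<Rightarrow> real" where "P q m = (\<Prod>i=1..m. 1 + q^i)"
definition g :: "real \<Rightarrow> nat \<Rightarrow> real" where "g q m = (\<Prod>i=1..m. qint q (2*i))"
definition W :: "real \<Rightarrow> nat \<Rightarrow> nat \<Rightarrow> real" where
  "W q n k = (if n = 0 then 1 else qint q n * g q (n-k-1) / (g q k * qfact q (n-2*k)))"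
definition cc :: "real \<Rightarrow> nat \<Rightarrow> nat \<Rightarrow> real" where
  "cc q n k = (if 2*k \<le> n then q^(k^2) * W q n k else 0)"

lemma P_Suc: "P q (Suc m) = P q m * (1 + q^Suc m)" by (simp add: P_def)
lemma g_Suc: "g q (Suc m) = g q m * qint q (2*Suc m)" by (simp add: g_def)
lemma qfact_Suc: "qfact q (Suc m) = qfact q m * qint q (Suc m)" by (simp add: qfact_def)
lemma P0[simp]: "P q 0 = 1" by (simp add: P_def)
lemma g0[simp]: "g q 0 = 1" by (simp add: g_def)
lemma qfact0[simp]: "qfact q 0 = 1" by (simp add: qfact_def)

lemma g_eq: "g q m = qfact q m * P q m"
proof (induction m)
  case (Suc m)
  show ?case using qint_double[of q "Suc m"] by (simp only: g_Suc qfact_Suc P_Suc Suc.IH) (simp only: mult_ac)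
qed simp

lemma P_nz: "q \<noteq> -1 \<Longrightarrow> P q m \<noteq> 0" proof (induction m)
  case (Suc m) thus ?case using onep_nz[of q "Suc m"] unfolding P_Suc by simp
qed simp
lemma qfact_nz: "q \<noteq> -1 \<Longrightarrow> qfact q m \<noteq> 0" proof (induction m)
  case (Suc m) thus ?case using qint_nz[of q "Suc m"] unfolding qfact_Suc by simp
qed simp
lemma g_nz: "q \<noteq> -1 \<Longrightarrow> g q m \<noteq> 0" by (simp add: g_eq P_nz qfact_nz)

lemma poly_id: fixes q :: real shows
  "(1-q^(2*k+3+m))*(1-q^(2*(k+m+1))) = (1+q^(2*k+2+m))*(1-q^(2*k+2+m))*(1-q^(m+1)) + q^(m+1)*(1-q^(2*k+1+m))*(1-q^(2*k+2))"
proof -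
  have e: "q^(2*k+3+m) = q^k*q^k*q*q*q*q^m" "q^(2*(k+m+1)) = q^k*q^k*q^m*q^m*q*q"
    "q^(2*k+2+m) = q^k*q^k*q*q*q^m" "q^(m+1) = q^m*q" "q^(2*k+1+m) = q^k*q^k*q*q^m"
    "q^(2*k+2) = q^k*q^k*q*q"
    by (simp_all add: power_add mult_2 eval_nat_numeral algebra_simps)
  show ?thesis unfolding e by algebra
qed

lemma core: "qint q (2*k+3+m) * qint q (2*(k+m+1)) = (1+q^(2*k+2+m))*qint q (2*k+2+m)*qint q (m+1) + q^(m+1)*qint q (2*k+1+m)*qint q (2*k+2)"
proof (cases "q = 1")
  case True thus ?thesis by (simp add: qint_1 algebra_simps)
next
  case False
  let ?c = "\<lambda>j. (1-q)*qint q j"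
  have L: "(1-q)*(1-q)*(qint q (2*k+3+m) * qint q (2*(k+m+1))) = ?c (2*k+3+m) * ?c (2*(k+m+1))"
    by algebra
  have R: "(1-q)*(1-q)*((1+q^(2*k+2+m))*qint q (2*k+2+m)*qint q (m+1) + q^(m+1)*qint q (2*k+1+m)*qint q (2*k+2))
     = (1+q^(2*k+2+m))*?c (2*k+2+m)*?c (m+1) + q^(m+1)*?c (2*k+1+m)*?c (2*k+2)"
    by algebra
  have "(1-q)*(1-q)*(qint q (2*k+3+m) * qint q (2*(k+m+1))) = (1-q)*(1-q)*((1+q^(2*k+2+m))*qint q (2*k+2+m)*qint q (m+1) + q^(m+1)*qint q (2*k+1+m)*qint q (2*k+2))"
    unfolding L R qint_closed by (rule poly_id)
  thus ?thesis using False by simp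
qed

lemma W_diag: assumes "q \<noteq> -1" shows "W q (2*k) k = 1"
proof (cases k)
  case 0 thus ?thesis by (simp add: W_def)
next
  case (Suc j)
  have "W q (2*Suc j) (Suc j) = qint q (2*Suc j) * g q j / (g q (Suc j) * qfact q 0)"
    by (simp add: W_def)
  thus ?thesis using g_nz[OF assms, of j] qint_nz[OF assms, of "2*Suc j"] Suc
    by (simp add: g_Suc del: mult_Suc_right)
qed

lemma cc_rec0: assumes "q \<noteq> -1" shows "cc q (Suc (Suc n)) 0 = (1 + q^Suc n) * cc q (Suc n) 0"
proof -
  have "cc q (Suc (Suc n)) 0 = qint q (Suc (Suc n)) * g q (Suc n) / qfact q (Suc (Suc n))"
    by (simp add: cc_def W_def)
  also have "\<dots> = qint q (Suc (Suc n)) * (g q n * ((1 + q^Suc n) * qint q (Suc n))) / (qfact q n * qint q (Suc n) * qint q (Suc (Suc n)))"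
    unfolding g_Suc qfact_Suc qint_double by simp
  also have "\<dots> = (1 + q^Suc n) * (g q n / qfact q n)"
    using qint_nz[OF assms, of "Suc n"] qint_nz[OF assms, of "Suc (Suc n)"] qfact_nz[OF assms, of n]
    by (simp add: field_simps)
  also have "g q n / qfact q n = cc q (Suc n) 0"
    using qint_nz[OF assms, of "Suc n"] qfact_nz[OF assms, of n]
    by (simp add: cc_def W_def qfact_Suc)
  finally show ?thesis .
qed

lemma cc_recS_main: assumes "q \<noteq> -1"
  shows "q^((Suc k)^2) * W q (2*k+3+m) (Suc k) = (1 + q^(2*k+2+m)) * (q^((Suc k)^2) * W q (2*k+2+m) (Suc k))
     + q^(2*k+2+m) * (q^(k^2) * W q (2*k+1+m) k)"
proof -
  have W1: "W q (2*k+3+m) (Suc k) = qint q (2*k+3+m) * (g q (k+m) * qint q (2*(k+m+1))) / ((g q k * qint q (2*k+2)) * (qfact q m * qint q (m+1)))"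
    proof -
      have "W q (2*k+3+m) (Suc k) = qint q (2*k+3+m) * g q (Suc (k+m)) / (g q (Suc k) * qfact q (Suc m))"
        by (simp add: W_def)
      thus ?thesis by (simp add: g_Suc qfact_Suc)
    qed
  have W2: "W q (2*k+2+m) (Suc k) = qint q (2*k+2+m) * g q (k+m) / ((g q k * qint q (2*k+2)) * qfact q m)"
    proof -
      have "W q (2*k+2+m) (Suc k) = qint q (2*k+2+m) * g q (k+m) / (g q (Suc k) * qfact q m)"
        by (simp add: W_def)
      thus ?thesis by (simp add: g_Suc)
    qed
  have W3: "W q (2*k+1+m) k = qint q (2*k+1+m) * g q (k+m) / (g q k * (qfact q m * qint q (m+1)))"
    proof -
      have "W q (2*k+1+m) k = qint q (2*k+1+m) * g q (k+m) / (g q k * qfact q (Suc m))"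
        by (simp add: W_def)
      thus ?thesis by (simp add: qfact_Suc)
    qed
  have "(Suc k)^2 = k^2 + (2*k+1)" by (simp add: power2_eq_square)
  hence ex: "q^((Suc k)^2) = q^(k^2) * q^(2*k+1)"
    by (simp add: power_add)
  have nz: "g q k \<noteq> 0" "qint q (2*k+2) \<noteq> 0" "qfact q m \<noteq> 0" "qint q (m+1) \<noteq> 0"
    using g_nz[OF assms] qint_nz[OF assms] qfact_nz[OF assms] by auto
  define Z where "Z = q^(k^2) * q^(2*k+1) * g q (k+m) / (g q k * qint q (2*k+2) * qfact q m * qint q (m+1))"
  have pe: "q^(2*k+2+m) = q^(2*k+1) * q^(m+1)" by (simp flip: power_add)
  have A: "q^((Suc k)^2) * W q (2*k+3+m) (Suc k) = Z * (qint q (2*k+3+m) * qint q (2*(k+m+1)))"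
    unfolding W1 ex Z_def using nz by (simp add: field_simps)
  have B: "(1 + q^(2*k+2+m)) * (q^((Suc k)^2) * W q (2*k+2+m) (Suc k)) = Z * ((1+q^(2*k+2+m))*qint q (2*k+2+m)*qint q (m+1))"
    unfolding W2 ex Z_def using nz by (simp add: field_simps)
  have C: "q^(2*k+2+m) * (q^(k^2) * W q (2*k+1+m) k) = Z * (q^(m+1)*qint q (2*k+1+m)*qint q (2*k+2))"
    unfolding W3 pe Z_def using nz by (simp add: field_simps)
  show ?thesis unfolding A B C core[of q k m] by (simp add: algebra_simps)
qed

lemma cc_recS: assumes "q \<noteq> -1"
  shows "cc q (Suc (Suc n)) (Suc k) = (1 + q^Suc n) * cc q (Suc n) (Suc k) + q^Suc n * cc q n k"
proof (cases "n < 2*k")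
  case True thus ?thesis by (simp add: cc_def)
next
  case False
  show ?thesis
  proof (cases "n = 2*k")
    case True
    have w1: "W q (Suc (Suc n)) (Suc k) = 1" using W_diag[OF assms, of "Suc k"] True by simp
    have w2: "W q n k = 1" using W_diag[OF assms, of k] True by simp
    have "(Suc k)^2 = k^2 + Suc n" using True by (simp add: power2_eq_square)
    hence ex: "q^((Suc k)^2) = q^(k^2) * q^Suc n" by (simp add: power_add)
    show ?thesis using True w1 w2 ex by (simp add: cc_def)
  next
    case False2: False
    obtain m where hn: "n = 2*k+1+m" using False False2 by (metis add.commute add_Suc_right less_imp_Suc_add linorder_neqE_nat plus_1_eq_Suc)
    have a: "cc q (2*k+3+m) (Suc k) = q^((Suc k)^2) * W q (2*k+3+m) (Suc k)"
      by (simp add: cc_def)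
    have b: "cc q (2*k+2+m) (Suc k) = q^((Suc k)^2) * W q (2*k+2+m) (Suc k)"
      by (simp add: cc_def)
    have c: "cc q (2*k+1+m) k = q^(k^2) * W q (2*k+1+m) k"
      by (simp add: cc_def)
    have e3: "Suc (Suc n) = 2*k+3+m" using hn by simp
    have e2: "Suc n = 2*k+2+m" using hn by simp
    show ?thesis unfolding e3 unfolding e2 unfolding hn a b c by (rule cc_recS_main[OF assms])
  qed
qed

lemma sum_single0: assumes h: "\<And>k. k \<noteq> 0 \<Longrightarrow> f k = 0" shows "(\<Sum>k\<le>(N::nat). f k) = (f 0 :: real)"
  by (induction N) (simp_all add: h)

lemma T_sum: 
  shows "q \<noteq> -1 \<Longrightarrow> n \<le> N \<Longrightarrow> T x s q n = (\<Sum>k\<le>N. cc q n k * s^k * x^(n-2*k))"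
proof (induction x s q n arbitrary: N rule: T.induct)
  case (1 x s q)
  show ?case by (subst sum_single0[of _ N]) (auto simp: cc_def W_def)
next
  case (2 x s q)
  show ?case by (subst sum_single0[of _ N]) (auto simp: cc_def W_def qfact_def qint_def)
next
  case (3 x s q n)
  note assms = 3(3)
  from 3 obtain M where M: "N = Suc M" "Suc n \<le> M" by (metis Suc_le_D Suc_le_mono)
  have IH1: "T x s q (Suc n) = cc q (Suc n) 0 * x^(Suc n) + (\<Sum>k\<le>M. cc q (Suc n) (Suc k) * s^Suc k * x^(Suc n - 2*Suc k))"
    using 3(1)[OF assms, of N] M unfolding M(1) sum.atMost_Suc_shift by simp
  have IH2: "T x s q n = (\<Sum>k\<le>M. cc q n k * s^k * x^(n-2*k))"
    using 3(2)[OF assms, of M] M by simp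
  have xx: "x * (cc q (Suc n) (Suc k) * s^Suc k * x^(Suc n - 2*Suc k)) = cc q (Suc n) (Suc k) * s^Suc k * x^(n - 2*k)" for k
  proof (cases "2 * Suc k \<le> Suc n")
    case True
    hence "n - 2*k = Suc (Suc n - 2 * Suc k)" by simp
    thus ?thesis by simp
  qed (simp add: cc_def)
  have "T x s q (Suc (Suc n)) = (1 + q^Suc n) * x * T x s q (Suc n) + q^Suc n * s * T x s q n" by simp
  also have "\<dots> = (1 + q^Suc n) * cc q (Suc n) 0 * x^(Suc (Suc n)) + (\<Sum>k\<le>M. ((1 + q^Suc n) * cc q (Suc n) (Suc k) + q^Suc n * cc q n k) * s^Suc k * x^(n-2*k))"
  proof -
    have s1: "x * (\<Sum>k\<le>M. cc q (Suc n) (Suc k) * s^Suc k * x^(Suc n - 2*Suc k)) = (\<Sum>k\<le>M. cc q (Suc n) (Suc k) * s^Suc k * x^(n - 2*k))"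
      by (simp only: sum_distrib_left xx)
    have s2: "s * (\<Sum>k\<le>M. cc q n k * s^k * x^(n-2*k)) = (\<Sum>k\<le>M. cc q n k * s^Suc k * x^(n-2*k))"
      by (simp add: sum_distrib_left algebra_simps)
    let ?S1 = "\<Sum>k\<le>M. cc q (Suc n) (Suc k) * s^Suc k * x^(Suc n - 2*Suc k)"
    let ?S2 = "\<Sum>k\<le>M. cc q n k * s^k * x^(n-2*k)"
    have "(1 + q^Suc n) * x * (cc q (Suc n) 0 * x^(Suc n) + ?S1) + q^Suc n * s * ?S2
      = (1 + q^Suc n) * cc q (Suc n) 0 * (x * x^(Suc n)) + (1 + q^Suc n) * (x * ?S1) + q^Suc n * (s * ?S2)"
      by (simp add: algebra_simps)
    also have "\<dots> = (1 + q^Suc n) * cc q (Suc n) 0 * x^(Suc (Suc n)) + (\<Sum>k\<le>M. ((1 + q^Suc n) * cc q (Suc n) (Suc k) + q^Suc n * cc q n k) * s^Suc k * x^(n-2*k))"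
      unfolding s1 s2 by (simp add: sum_distrib_left sum.distrib algebra_simps)
    finally show ?thesis unfolding IH1 IH2 .
  qed
  also have "\<dots> = (\<Sum>k\<le>N. cc q (Suc (Suc n)) k * s^k * x^(Suc (Suc n)-2*k))"
    unfolding M sum.atMost_Suc_shift by (simp add: cc_rec0[OF assms] cc_recS[OF assms])
  finally show ?case .
qed

lemma prod_nz1: assumes "q \<noteq> -1" shows "(\<Prod>i\<in>A. 1 + q^i) \<noteq> (0::real)"
  by (cases "finite A") (simp_all add: prod_zero_iff onep_nz[OF assms])

lemma P_ivl: "(\<Prod>i\<in>{1..<Suc m}. 1 + q^i) = P q m"
  unfolding P_def atLeastLessThanSuc_atLeastAtMost ..

lemma DE: assumes "q \<noteq> -1" "2*k \<le> n" "n \<ge> 1"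
  shows "(\<Prod>i\<in>{1..<n}. 1 + q ^ i) / ((\<Prod>i\<in>{1..k}. 1 + q ^ i) * (\<Prod>i\<in>{n-k..<n}. 1 + q ^ i))
    = P q (n-k-1) / P q k"
proof -
  have "(\<Prod>i\<in>{1..<n}. 1 + q ^ i) = (\<Prod>i\<in>{1..<n-k}. 1 + q ^ i) * (\<Prod>i\<in>{n-k..<n}. 1 + q ^ i)"
    using assms by (intro prod.atLeastLessThan_concat[symmetric]) auto
  moreover have "(\<Prod>i\<in>{1..<n-k}. 1 + q ^ i) = P q (n-k-1)"
    using P_ivl[of q "n-k-1"] assms by (simp add: Suc_diff_Suc)
  moreover have "(\<Prod>i\<in>{1..k}. 1 + q ^ i) = P q k" by (simp add: P_def)
  ultimately show ?thesis using prod_nz1[OF assms(1), of "{n-k..<n}"] P_nz[OF assms(1), of k]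
    by (simp add: field_simps)
qed

lemma mid: assumes "q \<noteq> -1" "2*k+1 \<le> n"
  shows "(\<Prod>i\<in>{k+1..<n-k}. 1 + q ^ i) = P q (n-k-1) / P q k"
proof -
  have "(\<Prod>i\<in>{1..<n-k}. 1 + q ^ i) = (\<Prod>i\<in>{1..<k+1}. 1 + q ^ i) * (\<Prod>i\<in>{k+1..<n-k}. 1 + q ^ i)"
    using assms by (intro prod.atLeastLessThan_concat[symmetric]) auto
  moreover have "(\<Prod>i\<in>{1..<n-k}. 1 + q ^ i) = P q (n-k-1)"
    using P_ivl[of q "n-k-1"] assms by (simp add: Suc_diff_Suc)
  moreover have "(\<Prod>i\<in>{1..<k+1}. 1 + q ^ i) = P q k" using P_ivl[of q k] by simp
  ultimately show ?thesis using P_nz[OF assms(1), of k]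
    by (simp add: field_simps)
qed

lemma form1: assumes "q \<noteq> -1" "2*k \<le> n"
  shows "(\<Prod>i\<in>{1..<n}. 1 + q ^ i) / ((\<Prod>i\<in>{1..k}. 1 + q ^ i) * (\<Prod>i\<in>{n-k..<n}. 1 + q ^ i))
     * (if n = 0 then 1 else qint q n / qint q (n - k)) * qbinom q (n - k) k = W q n k"
proof (cases "n = 0")
  case True thus ?thesis using assms by (simp add: W_def qbinom_def)
next
  case False
  hence n1: "n \<ge> 1" by simp
  have qb: "qbinom q (n-k) k = qfact q (n-k-1) * qint q (n-k) / (qfact q k * qfact q (n-2*k))"
  proof -
    have "n - k = Suc (n-k-1)" using assms n1 by simp
    hence "qfact q (n-k) = qfact q (n-k-1) * qint q (n-k)" by (metis qfact_Suc)
    moreover have "n - k - k = n - 2*k" by simp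
    ultimately show ?thesis by (simp add: qbinom_def)
  qed
  have nz: "P q k \<noteq> 0" "qint q (n-k) \<noteq> 0" "qfact q k \<noteq> 0" "qfact q (n-2*k) \<noteq> 0" "P q (n-k-1) \<noteq> 0"
    using P_nz[OF assms(1)] qfact_nz[OF assms(1)] qint_nz[OF assms(1), of "n-k"] assms n1 by auto
  show ?thesis unfolding DE[OF assms n1] qb using False nz
    by (simp add: W_def g_eq field_simps)
qed

lemma term_eq: assumes "q \<noteq> -1" "2*k \<le> n"
  shows "q ^ (k^2)
         * ((\<Prod>i\<in>{1..<n}. 1 + q ^ i)
            / ((\<Prod>i\<in>{1..k}. 1 + q ^ i) * (\<Prod>i\<in>{n-k..<n}. 1 + q ^ i)))
         * (if n = 0 then 1 else qint q n / qint q (n - k))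
         * qbinom q (n - k) k * s ^ k * x ^ (n - 2*k) = q^(k^2) * W q n k * s^k * x^(n-2*k)"
  using form1[OF assms] by (metis mult.assoc)

lemma assoc4: "(A::real)*B*C = w \<Longrightarrow> p*A*B*C*u*v = p*w*u*v" by (metis mult.assoc)

theorem theorem2p5:
  fixes x s q :: real and n :: nat
  assumes "q \<noteq> -1"
  shows "T x s q n =
      (\<Sum>k=0..n div 2. q ^ (k^2)
         * ((\<Prod>i\<in>{1..<n}. 1 + q ^ i)
            / ((\<Prod>i\<in>{1..k}. 1 + q ^ i) * (\<Prod>i\<in>{n-k..<n}. 1 + q ^ i)))
         * (if n = 0 then 1 else qint q n / qint q (n - k))
         * qbinom q (n - k) k * s ^ k * x ^ (n - 2*k))
    \<and> T x s q n =
      (\<Sum>k<(n+1) div 2. q ^ (k^2)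
         * (\<Prod>i\<in>{k+1..<n-k}. 1 + q ^ i)
         * (if n = 0 then 1 else qint q n / qint q (n - k))
         * qbinom q (n - k) k * s ^ k * x ^ (n - 2*k))
      + (if even n then q ^ ((n div 2)^2) * s ^ (n div 2) else 0)"
proof -
  define f where "f k = q^(k^2) * W q n k * s^k * x^(n-2*k)" for k
  have S0: "T x s q n = (\<Sum>k\<le>n. cc q n k * s^k * x^(n-2*k))"
    using T_sum[OF assms order_refl] .
  also have "\<dots> = (\<Sum>k=0..n div 2. cc q n k * s^k * x^(n-2*k))"
    by (rule sum.mono_neutral_right) (auto simp: cc_def)
  also have "\<dots> = (\<Sum>k=0..n div 2. f k)"
    by (rule sum.cong) (auto simp: cc_def f_def)
  finally have S: "T x s q n = (\<Sum>k=0..n div 2. f k)" .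
  have part1: "(\<Sum>k=0..n div 2. q ^ (k^2)
         * ((\<Prod>i\<in>{1..<n}. 1 + q ^ i)
            / ((\<Prod>i\<in>{1..k}. 1 + q ^ i) * (\<Prod>i\<in>{n-k..<n}. 1 + q ^ i)))
         * (if n = 0 then 1 else qint q n / qint q (n - k))
         * qbinom q (n - k) k * s ^ k * x ^ (n - 2*k)) = (\<Sum>k=0..n div 2. f k)"
  proof (rule sum.cong)
    fix k assume "k \<in> {0..n div 2}"
    hence k: "2*k \<le> n" by auto
    show "q ^ (k^2)
         * ((\<Prod>i\<in>{1..<n}. 1 + q ^ i)
            / ((\<Prod>i\<in>{1..k}. 1 + q ^ i) * (\<Prod>i\<in>{n-k..<n}. 1 + q ^ i)))
         * (if n = 0 then 1 else qint q n / qint q (n - k))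
         * qbinom q (n - k) k * s ^ k * x ^ (n - 2*k) = f k"
      using term_eq[OF assms k] unfolding f_def .
  qed simp
  have part2: "(\<Sum>k<(n+1) div 2. q ^ (k^2)
         * (\<Prod>i\<in>{k+1..<n-k}. 1 + q ^ i)
         * (if n = 0 then 1 else qint q n / qint q (n - k))
         * qbinom q (n - k) k * s ^ k * x ^ (n - 2*k)) = (\<Sum>k<(n+1) div 2. f k)"
  proof (rule sum.cong)
    fix k assume "k \<in> {..<(n+1) div 2}"
    hence k: "2*k+1 \<le> n" by auto
    have "(\<Prod>i\<in>{k+1..<n-k}. 1 + q ^ i) = (\<Prod>i\<in>{1..<n}. 1 + q ^ i)
            / ((\<Prod>i\<in>{1..k}. 1 + q ^ i) * (\<Prod>i\<in>{n-k..<n}. 1 + q ^ i))"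
      using mid[OF assms k] DE[OF assms, of k] k by simp
    hence "q ^ (k^2)
         * (\<Prod>i\<in>{k+1..<n-k}. 1 + q ^ i)
         * (if n = 0 then 1 else qint q n / qint q (n - k))
         * qbinom q (n - k) k * s ^ k * x ^ (n - 2*k) = q ^ (k^2)
         * ((\<Prod>i\<in>{1..<n}. 1 + q ^ i)
            / ((\<Prod>i\<in>{1..k}. 1 + q ^ i) * (\<Prod>i\<in>{n-k..<n}. 1 + q ^ i)))
         * (if n = 0 then 1 else qint q n / qint q (n - k))
         * qbinom q (n - k) k * s ^ k * x ^ (n - 2*k)" by (simp only:)
    also have "\<dots> = f k" using term_eq[OF assms, of k n s x] k unfolding f_def by linarith
    finally show "q ^ (k^2)
         * (\<Prod>i\<in>{k+1..<n-k}. 1 + q ^ i)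
         * (if n = 0 then 1 else qint q n / qint q (n - k))
         * qbinom q (n - k) k * s ^ k * x ^ (n - 2*k) = f k" .
  qed simp
  have split: "(\<Sum>k=0..n div 2. f k) = (\<Sum>k<(n+1) div 2. f k) + (if even n then q ^ ((n div 2)^2) * s ^ (n div 2) else 0)"
  proof (cases "even n")
    case True
    then obtain j where j: "n = 2*j" by auto
    have "{0..n div 2} = insert j {..<(n+1) div 2}" using j by auto
    moreover have "f j = q^(j^2) * s^j" using W_diag[OF assms, of j] j by (simp add: f_def)
    ultimately show ?thesis using j by simp
  next
    case False
    then obtain j where j: "n = 2*j+1" using oddE by blast
    have "{0..n div 2} = {..<(n+1) div 2}" using j by auto
    thus ?thesis using False by simp
  qed
  show ?thesis using S part1 part2 split by simp
qed

end
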